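(* Let $n\geq 4$ and let $Q$ be any convex $n$-gon. Then there exist vectors $x_d\in X_Q$, one for each $d\in\mathrm{Diag}_n$, such that $\langle [\psi_{d'}], x_d\rangle>0$ for all $d,d'\in\mathrm{Diag}_n$ that do not cross (including $d=d'$). Equivalently, the secondary polytope $\Sigma_Q$ satisfies: there is an assignment $f\mapsto x_f\in X_Q$ on facets with $\langle f_1^\perp,x_{f_2}\rangle>0$ whenever facets $f_1,f_2$ share a vertex.
   Context: Let $Q$ be a convex $n$-gon in $\mathbb{R}^2$ with vertices $p_1,\dots,p_n$ in cyclic order; identify $p_i$ with label $i$, so triangulations of $Q$ (using only vertices of $Q$) are identified with elements of $\mathcal{T}_n$ (each triangulation identified with its set of diagonals) and diagonals with elements of $\mathrm{Diag}_n=\{\{i,j\}\subseteq[n]: i-j\not\equiv\pm1 \pmod n\}$. Two diagonals cross if they meet in the interior of $Q$. Let $X_Q$ be the space of formal combinations $\sum_{p\in V(Q)} c_p\cdot p$ with $\sum_p c_p=0$ and $\sum_p c_p p=0$ in $\mathbb{R}^2$; let $X_Q^*$ be the space of functions $V(Q)\to\mathbb{R}$ modulo restrictions of affine functions $\mathbb{R}^2\to\mathbb{R}$, with pairing $\langle[\psi],\sum_p c_p\cdot p\rangle=\sum_p c_p\psi(p)$. For a triangulation $T$ let $v_T=(\operatorname{area}(Q_{T,p}))_{p\in V(Q)}$ where $Q_{T,p}$ is the union of the triangles of $T$ having $p$ as a vertex. The secondary polytope $\Sigma_Q$ is the convex hull of the $v_T$, translated to lie in $X_Q$. It is known (Gelfand–Kapranov–Zelevinsky)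 that $\Sigma_Q$ is a full-dimensional polytope in the $(n-3)$-dimensional space $X_Q$ realizing the associahedron: its vertices are exactly the points $v_T$, $T\in\mathcal{T}_n$; its facets are $f_d$, $d\in\mathrm{Diag}_n$, where $f_d$ contains $v_T$ iff $d\in T$; and an outward normal of $f_d$ is $f_d^\perp=[\psi_d]$, where $\psi_d=\min(\ell_d,0)$ restricted to $V(Q)$ and $\ell_d$ is any nonzero affine function vanishing at both endpoints of $d$. Two facets $f_d,f_{d'}$ share a vertex iff $d,d'$ do not cross. *)

theory Defs
  imports "HOL-Analysis.Analysis"
begin

text \<open>Vertices of the polygon Q are p 1, ..., p n (points of real^2), labels 1..n.\<close>

definition orient :: "real^2 \<Rightarrow> real^2 \<Rightarrow> real^2 \<Rightarrow> real" where
  "orient a b c = (b$1 - a$1) * (c$2 - a$2) - (b$2 - a$2) * (c$1 - a$1)"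

definition convex_ngon :: "nat \<Rightarrow> (nat \<Rightarrow> real^2) \<Rightarrow> bool" where
  "convex_ngon n p \<longleftrightarrow>
     (\<forall>i j k. 1 \<le> i \<longrightarrow> i < j \<longrightarrow> j < k \<longrightarrow> k \<le> n \<longrightarrow> orient (p i) (p j) (p k) > 0) \<or>
     (\<forall>i j k. 1 \<le> i \<longrightarrow> i < j \<longrightarrow> j < k \<longrightarrow> k \<le> n \<longrightarrow> orient (p i) (p j) (p k) < 0)"

definition Diag :: "nat \<Rightarrow> nat set set" where
  "Diag n = {{i, j} | i j. i \<in> {1..n} \<and> j \<in> {1..n} \<and> i \<noteq> j \<and>
              (int i - int j) mod int n \<noteq> 1 mod int n \<and> (int i - int j) mod int n \<noteq> (-1) mod int n}"

text \<open>Two diagonals of a convex polygon cross (meet in the interior of Q)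
  iff their endpoints interleave in the cyclic order.\<close>
definition crosses :: "nat set \<Rightarrow> nat set \<Rightarrow> bool" where
  "crosses d d' \<longleftrightarrow> (\<exists>i j k l. i < k \<and> k < j \<and> j < l \<and>
       ((d = {i, j} \<and> d' = {k, l}) \<or> (d = {k, l} \<and> d' = {i, j})))"

definition XQ :: "nat \<Rightarrow> (nat \<Rightarrow> real^2) \<Rightarrow> (nat \<Rightarrow> real) set" where
  "XQ n p = {c. (\<forall>k. k \<notin> {1..n} \<longrightarrow> c k = 0) \<and> (\<Sum>k\<in>{1..n}. c k) = 0 \<and>
                (\<Sum>k\<in>{1..n}. c k *\<^sub>R p k) = 0}"

text \<open>psi_d for the affine function l(x) = a \<bullet> x + b: min(l, 0) on vertices.\<close>
definition psi :: "(nat \<Rightarrow> real^2) \<Rightarrow> real^2 \<Rightarrow> real \<Rightarrow> nat \<Rightarrow> real" where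
  "psi p a b k = min (a \<bullet> p k + b) 0"

definition pairing :: "nat \<Rightarrow> (nat \<Rightarrow> real) \<Rightarrow> (nat \<Rightarrow> real) \<Rightarrow> real" where
  "pairing n psi' c = (\<Sum>k\<in>{1..n}. c k * psi' k)"

end

theory Submission
  imports Defs
begin


lemma orient_cyc: "orient a b c = orient b c a"
  by (simp add: orient_def algebra_simps)
lemma orient_swap: "orient a c b = - orient a b c"
  by (simp add: orient_def algebra_simps)
lemma orient_degen: "orient a b a = 0" "orient a b b = 0"
  by (simp_all add: orient_def algebra_simps)

lemma dep_sum: "orient b c e - orient a c e + orient a b e - orient a b c = 0"
  by (simp add: orient_def algebra_simps)

lemma dep_vec: "orient b c e *\<^sub>R a - orient a c e *\<^sub>R b + orient a b e *\<^sub>R c - orient a b c *\<^sub>R e = (0::real^2)"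
  by (simp add: vec_eq_iff forall_2 orient_def algebra_simps)

lemma inner2: "(x::real^2) \<bullet> y = x$1*y$1 + x$2*y$2"
  by (simp add: inner_vec_def sum_2)

lemma line_rep:
  fixes a P Q :: "real^2"
  assumes "P \<noteq> Q" "a \<bullet> P + b = 0" "a \<bullet> Q + b = 0" "a \<noteq> 0 \<or> b \<noteq> 0"
  shows "\<exists>\<kappa>. \<kappa> \<noteq> 0 \<and> (\<forall>X. a \<bullet> X + b = \<kappa> * orient P Q X)"
proof -
  define D1 where "D1 = Q$1 - P$1"
  define D2 where "D2 = Q$2 - P$2"
  have perp: "a$1 * D1 + a$2 * D2 = 0" using assms(2,3) unfolding D1_def D2_def inner2
    by (simp add: algebra_simps)
  have bP: "b = - (a$1*P$1 + a$2*P$2)" using assms(2) by (simp add: inner2)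
  have a0: "a$1 \<noteq> 0 \<or> a$2 \<noteq> 0"
  proof (rule ccontr)
    assume "\<not> ?thesis"
    then have "a = 0" by (simp add: vec_eq_iff forall_2)
    with assms(4) bP show False by simp
  qed
  have D: "D1 \<noteq> 0 \<or> D2 \<noteq> 0" using assms(1) unfolding D1_def D2_def
    by (auto simp: vec_eq_iff forall_2)
  show ?thesis
  proof (cases "D1 \<noteq> 0")
    case True
    have a1: "a$1 = - a$2 * D2 / D1" using perp True by (simp add: field_simps)
    show ?thesis
    proof (intro exI[of _ "a$2 / D1"] conjI allI)
      show "a$2 / D1 \<noteq> 0" using a0 a1 True by auto
      fix X :: "real^2"
      show "a \<bullet> X + b = a$2 / D1 * orient P Q X"
        unfolding inner2 bP orient_def D1_def[symmetric] D2_def[symmetric] a1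
        using True by (simp add: field_simps)
    qed
  next
    case False
    then have T: "D2 \<noteq> 0" using D by auto
    have a2: "a$2 = - a$1 * D1 / D2" using perp T by (simp add: field_simps)
    show ?thesis
    proof (intro exI[of _ "- a$1 / D2"] conjI allI)
      show "- a$1 / D2 \<noteq> 0" using a0 a2 T by auto
      fix X :: "real^2"
      show "a \<bullet> X + b = - a$1 / D2 * orient P Q X"
        unfolding inner2 bP orient_def D1_def[symmetric] D2_def[symmetric] a2
        using T by (simp add: field_simps)
    qed
  qed
qed

lemma term_L:
  fixes ci cg cj ch Li Lg Lj Lh :: real
  assumes "ci > 0" "cj > 0" "cg < 0" "ch < 0"
    and s0: "ci*Li + cg*Lg + cj*Lj + ch*Lh = 0"
    and same: "(Li \<le> 0 \<and> Lj \<le> 0) \<or> (Li \<ge> 0 \<and> Lj \<ge> 0)"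
  shows "ci*min Li 0 + cg*min Lg 0 + cj*min Lj 0 + ch*min Lh 0 \<ge> 0"
    and "(Li \<le> 0 \<and> Lj \<le> 0 \<and> (Lg > 0 \<or> Lh > 0)) \<or> (Li \<ge> 0 \<and> Lj \<ge> 0 \<and> (Lg < 0 \<or> Lh < 0))
       \<Longrightarrow> ci*min Li 0 + cg*min Lg 0 + cj*min Lj 0 + ch*min Lh 0 > 0"
proof -
  have A: "ci*min Li 0 + cg*min Lg 0 + cj*min Lj 0 + ch*min Lh 0 = - cg * max Lg 0 - ch * max Lh 0"
    if "Li \<le> 0" "Lj \<le> 0"
  proof -
    have "min Lg 0 = Lg - max Lg 0" "min Lh 0 = Lh - max Lh 0" by auto
    then show ?thesis using that s0 by (simp add: min_def algebra_simps) 
  qed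
  have B: "ci*min Li 0 + cg*min Lg 0 + cj*min Lj 0 + ch*min Lh 0 = cg * min Lg 0 + ch * min Lh 0"
    if "Li \<ge> 0" "Lj \<ge> 0" using that by (simp add: min_def)
  have p1: "- cg * max Lg 0 \<ge> 0" "- ch * max Lh 0 \<ge> 0" using assms(3,4) by (simp_all add: mult_nonpos_nonneg)
  have p2: "cg * min Lg 0 \<ge> 0" "ch * min Lh 0 \<ge> 0" using assms(3,4) by (simp_all add: mult_nonpos_nonpos)
  show "ci*min Li 0 + cg*min Lg 0 + cj*min Lj 0 + ch*min Lh 0 \<ge> 0"
    using same A B p1 p2 by auto
  assume st: "(Li \<le> 0 \<and> Lj \<le> 0 \<and> (Lg > 0 \<or> Lh > 0)) \<or> (Li \<ge> 0 \<and> Lj \<ge> 0 \<and> (Lg < 0 \<or> Lh < 0))"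
  have q1: "Lg > 0 \<Longrightarrow> - cg * max Lg 0 > 0" "Lh > 0 \<Longrightarrow> - ch * max Lh 0 > 0" using assms(3,4) by (auto simp: mult_neg_pos)
  have q2: "Lg < 0 \<Longrightarrow> cg * min Lg 0 > 0" "Lh < 0 \<Longrightarrow> ch * min Lh 0 > 0" using assms(3,4)
    by (auto simp: mult_neg_neg)
  show "ci*min Li 0 + cg*min Lg 0 + cj*min Lj 0 + ch*min Lh 0 > 0"
    using st A B p1 p2 q1 q2 by fastforce
qed



definition quadc :: "(nat \<Rightarrow> real^2) \<Rightarrow> real \<Rightarrow> nat \<Rightarrow> nat \<Rightarrow> nat \<Rightarrow> nat \<Rightarrow> nat \<Rightarrow> real" where
  "quadc p \<sigma> i g j h k = \<sigma> * ((if k = i then orient (p g) (p j) (p h) else 0)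
     + (if k = g then - orient (p i) (p j) (p h) else 0)
     + (if k = j then orient (p i) (p g) (p h) else 0)
     + (if k = h then - orient (p i) (p g) (p j) else 0))"

lemma delta_sum: "finite K \<Longrightarrow> i \<in> K \<Longrightarrow> (\<Sum>k\<in>K. (if k = i then A else 0) * f k) = A * (f i :: real)"
proof -
  assume "finite K" "i \<in> K"
  have "(\<Sum>k\<in>K. (if k = i then A else 0) * f k) = (\<Sum>k\<in>K. if k = i then A * f i else 0)"
    by (rule sum.cong) auto
  then show ?thesis using \<open>finite K\<close> \<open>i \<in> K\<close> by simp
qed

lemma delta_sumR: "finite K \<Longrightarrow> i \<in> K \<Longrightarrow> (\<Sum>k\<in>K. (if k = i then A else 0) *\<^sub>R f k) = A *\<^sub>R (f i :: real^2)"
proof -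
  assume "finite K" "i \<in> K"
  have "(\<Sum>k\<in>K. (if k = i then A else 0) *\<^sub>R f k) = (\<Sum>k\<in>K. if k = i then A *\<^sub>R f i else 0)"
    by (rule sum.cong) auto
  then show ?thesis using \<open>finite K\<close> \<open>i \<in> K\<close> by simp
qed

lemma delta_sum1: "finite K \<Longrightarrow> i \<in> K \<Longrightarrow> (\<Sum>k\<in>K. (if k = i then A else 0)) = (A::real)"
  using delta_sum[of K i A "\<lambda>_. 1"] by simp

lemma quad_pair:
  assumes "i \<in> {1..n}" "g \<in> {1..n}" "j \<in> {1..n}" "h \<in> {1..n}"
  shows "pairing n \<psi> (quadc p \<sigma> i g j h) =
     (\<sigma> * orient (p g) (p j) (p h)) * \<psi> i + (- \<sigma> * orient (p i) (p j) (p h)) * \<psi> g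
     + (\<sigma> * orient (p i) (p g) (p h)) * \<psi> j + (- \<sigma> * orient (p i) (p g) (p j)) * \<psi> h"
proof -
  let ?A = "orient (p g) (p j) (p h)" and ?B = "- orient (p i) (p j) (p h)"
  let ?C = "orient (p i) (p g) (p h)" and ?D = "- orient (p i) (p g) (p j)"
  have "pairing n \<psi> (quadc p \<sigma> i g j h) = \<sigma> * ((\<Sum>k\<in>{1..n}. (if k = i then ?A else 0) * \<psi> k)
     + (\<Sum>k\<in>{1..n}. (if k = g then ?B else 0) * \<psi> k) + (\<Sum>k\<in>{1..n}. (if k = j then ?C else 0) * \<psi> k)
     + (\<Sum>k\<in>{1..n}. (if k = h then ?D else 0) * \<psi> k))"
    unfolding pairing_def quadc_def sum.distrib[symmetric] sum_distrib_left
    by (rule sum.cong) (simp_all add: algebra_simps)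
  also have "\<dots> = \<sigma> * (?A * \<psi> i + ?B * \<psi> g + ?C * \<psi> j + ?D * \<psi> h)"
    using assms by (simp add: delta_sum)
  finally show ?thesis by (simp add: algebra_simps)
qed

lemma quad_sum:
  assumes "i \<in> {1..n}" "g \<in> {1..n}" "j \<in> {1..n}" "h \<in> {1..n}"
  shows "(\<Sum>k\<in>{1..n}. quadc p \<sigma> i g j h k) = 0"
proof -
  let ?A = "orient (p g) (p j) (p h)" and ?B = "- orient (p i) (p j) (p h)"
  let ?C = "orient (p i) (p g) (p h)" and ?D = "- orient (p i) (p g) (p j)"
  have "(\<Sum>k\<in>{1..n}. quadc p \<sigma> i g j h k) = \<sigma> * ((\<Sum>k\<in>{1..n}. (if k = i then ?A else 0))
     + (\<Sum>k\<in>{1..n}. (if k = g then ?B else 0)) + (\<Sum>k\<in>{1..n}. (if k = j then ?C else 0))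
     + (\<Sum>k\<in>{1..n}. (if k = h then ?D else 0)))"
    unfolding quadc_def sum.distrib[symmetric] sum_distrib_left by simp
  also have "\<dots> = \<sigma> * (?A + ?B + ?C + ?D)"
    using assms by (simp add: delta_sum1)
  also have "?A + ?B + ?C + ?D = 0" using dep_sum[of "p g" "p j" "p h" "p i"] by linarith
  finally show ?thesis by simp
qed

lemma scal4: "(s*(a+b+c+d)) *\<^sub>R (P::real^2) = s *\<^sub>R (a *\<^sub>R P + b *\<^sub>R P + c *\<^sub>R P + d *\<^sub>R P)"
  by (simp add: algebra_simps)

lemma quad_vec:
  assumes "i \<in> {1..n}" "g \<in> {1..n}" "j \<in> {1..n}" "h \<in> {1..n}"
  shows "(\<Sum>k\<in>{1..n}. quadc p \<sigma> i g j h k *\<^sub>R p k) = 0"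
proof -
  let ?A = "orient (p g) (p j) (p h)" and ?B = "- orient (p i) (p j) (p h)"
  let ?C = "orient (p i) (p g) (p h)" and ?D = "- orient (p i) (p g) (p j)"
  have "(\<Sum>k\<in>{1..n}. quadc p \<sigma> i g j h k *\<^sub>R p k) = \<sigma> *\<^sub>R ((\<Sum>k\<in>{1..n}. (if k = i then ?A else 0) *\<^sub>R p k)
     + (\<Sum>k\<in>{1..n}. (if k = g then ?B else 0) *\<^sub>R p k) + (\<Sum>k\<in>{1..n}. (if k = j then ?C else 0) *\<^sub>R p k)
     + (\<Sum>k\<in>{1..n}. (if k = h then ?D else 0) *\<^sub>R p k))"
    unfolding quadc_def sum.distrib[symmetric] scaleR_sum_right
    by (rule sum.cong[OF refl], rule scal4)
  also have "\<dots> = \<sigma> *\<^sub>R (?A *\<^sub>R p i + ?B *\<^sub>R p g + ?C *\<^sub>R p j + ?D *\<^sub>R p h)"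
    using assms by (simp add: delta_sumR)
  also have "?A *\<^sub>R p i + ?B *\<^sub>R p g + ?C *\<^sub>R p j + ?D *\<^sub>R p h = 0"
    using dep_vec[of "p g" "p j" "p h" "p i"] by (simp add: algebra_simps)
  finally show ?thesis by simp
qed

lemma quad_out:
  assumes "i \<in> {1..n}" "g \<in> {1..n}" "j \<in> {1..n}" "h \<in> {1..n}" "k \<notin> {1..n}"
  shows "quadc p \<sigma> i g j h k = 0"
  using assms unfolding quadc_def by auto

lemma dsum_pos:
  fixes f :: "'a \<Rightarrow> 'b \<Rightarrow> real"
  assumes "finite A" "finite B" "g0 \<in> A" "h0 \<in> B" "\<forall>g\<in>A. \<forall>h\<in>B. f g h \<ge> 0" "f g0 h0 > 0"
  shows "(\<Sum>g\<in>A. \<Sum>h\<in>B. f g h) > 0"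
proof (rule sum_pos2[OF assms(1,3)])
  show "0 < (\<Sum>h\<in>B. f g0 h)" using sum_pos2[OF assms(2,4)] assms(3,5,6) by auto
  show "\<And>g. g \<in> A \<Longrightarrow> 0 \<le> (\<Sum>h\<in>B. f g h)" using assms(5) by (simp add: sum_nonneg)
qed

lemma pairing_dsum:
  "pairing n \<psi> (\<lambda>k. \<Sum>g\<in>A. \<Sum>h\<in>B. F g h k) = (\<Sum>g\<in>A. \<Sum>h\<in>B. pairing n \<psi> (F g h))"
  unfolding pairing_def sum_distrib_right
  by (subst sum.swap, rule sum.cong, simp, subst sum.swap, simp)

lemma side:
  fixes \<sigma> :: real
  assumes hpos: "\<forall>i j k. 1 \<le> i \<longrightarrow> i < j \<longrightarrow> j < k \<longrightarrow> k \<le> n \<longrightarrow> \<sigma> * orient (p i) (p j) (p k) > 0"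
    and uv: "1 \<le> u" "u < v" "v \<le> n" and k: "k \<in> {1..n}"
  shows "k < u \<or> v < k \<Longrightarrow> \<sigma> * orient (p u) (p v) (p k) > 0"
    and "u < k \<Longrightarrow> k < v \<Longrightarrow> \<sigma> * orient (p u) (p v) (p k) < 0"
    and "k = u \<or> k = v \<Longrightarrow> \<sigma> * orient (p u) (p v) (p k) = 0"
proof -
  assume "k < u \<or> v < k"
  then show "\<sigma> * orient (p u) (p v) (p k) > 0"
  proof
    assume "k < u" then show ?thesis using hpos[rule_format, of k u v] uv k
      by (simp add: orient_cyc[of "p k"])
  next
    assume "v < k" then show ?thesis using hpos[rule_format, of u v k] uv k by simp
  qed
next
  assume "u < k" "k < v"
  then show "\<sigma> * orient (p u) (p v) (p k) < 0" using hpos[rule_format, of u k v] uv k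
    by (simp add: orient_swap[of "p u" "p v"])
next
  assume "k = u \<or> k = v"
  then show "\<sigma> * orient (p u) (p v) (p k) = 0" by (auto simp: orient_degen)
qed

lemma diag_elim:
  assumes "d \<in> Diag n" "n \<ge> 4"
  obtains i j where "d = {i, j}" "1 \<le> i" "i + 1 < j" "j \<le> n" "\<not> (i = 1 \<and> j = n)"
proof -
  obtain i j where d: "d = {i,j}" "i \<in> {1..n}" "j \<in> {1..n}" "i \<noteq> j"
    "(int i - int j) mod int n \<noteq> 1 mod int n" "(int i - int j) mod int n \<noteq> (-1) mod int n"
    using assms(1) unfolding Diag_def by blast
  have n1: "1 mod int n = 1" using assms(2) by simp
  have n2: "(-1) mod int n = int n - 1" using assms(2) by (simp add: zmod_minus1)
  have key: "\<And>a b. a \<in> {1..n} \<Longrightarrow> b \<in> {1..n} \<Longrightarrow> a < b \<Longrightarrow>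
      (int a - int b) mod int n \<noteq> 1 \<Longrightarrow> (int a - int b) mod int n \<noteq> int n - 1 \<Longrightarrow>
      a + 1 < b \<and> \<not> (a = 1 \<and> b = n)"
  proof -
    fix a b assume ab: "a \<in> {1..n}" "b \<in> {1..n}" "a < b" and m1: "(int a - int b) mod int n \<noteq> 1"
      and m2: "(int a - int b) mod int n \<noteq> int n - 1"
    show "a + 1 < b \<and> \<not> (a = 1 \<and> b = n)"
    proof -
      have "(int a - int b) mod int n = (int a - int b + int n) mod int n" by simp
      also have "\<dots> = int a - int b + int n" using ab by (intro mod_pos_pos_trivial) auto
      finally show ?thesis using m1 m2 ab by auto
    qed
  qed
  show ?thesis
  proof (cases "i < j")
    case True
    then show ?thesis using key[of i j] d n1 n2 that[of i j] by auto
  next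
    case False
    then have "j < i" using d by auto
    have "(int j - int i) mod int n \<noteq> 1"
    proof
      assume "(int j - int i) mod int n = 1"
      then have "(-(int j - int i)) mod int n = (-1) mod int n" by (metis mod_minus_eq)
      then show False using d(6) by simp
    qed
    moreover have "(int j - int i) mod int n \<noteq> int n - 1"
    proof
      assume "(int j - int i) mod int n = int n - 1"
      then have "(int j - int i) mod int n = (-1) mod int n" using n2 by simp
      then have "(-(int j - int i)) mod int n = (- (-1)) mod int n" by (metis mod_minus_eq)
      then show False using d(5) by simp
    qed
    ultimately show ?thesis using key[of j i] d `j < i` that[of j i] by (auto simp: insert_commute)
  qed
qed



lemma term_S:
  fixes ci cg cj ch Si Sg Sj Sh s :: real
  assumes "ci > 0" "cj > 0" "cg < 0" "ch < 0" "s \<noteq> 0"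
    and s0: "ci*(s*Si) + cg*(s*Sg) + cj*(s*Sj) + ch*(s*Sh) = 0"
    and same: "(Si \<le> 0 \<and> Sj \<le> 0) \<or> (Si \<ge> 0 \<and> Sj \<ge> 0)"
  shows "ci*min (s*Si) 0 + cg*min (s*Sg) 0 + cj*min (s*Sj) 0 + ch*min (s*Sh) 0 \<ge> 0"
    and "(Si \<le> 0 \<and> Sj \<le> 0 \<and> (Sg > 0 \<or> Sh > 0)) \<or> (Si \<ge> 0 \<and> Sj \<ge> 0 \<and> (Sg < 0 \<or> Sh < 0))
       \<Longrightarrow> ci*min (s*Si) 0 + cg*min (s*Sg) 0 + cj*min (s*Sj) 0 + ch*min (s*Sh) 0 > 0"
proof -
  have sameL: "(s*Si \<le> 0 \<and> s*Sj \<le> 0) \<or> (s*Si \<ge> 0 \<and> s*Sj \<ge> 0)"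
    using assms(5) same by (cases "s > 0") (auto simp: mult_le_0_iff zero_le_mult_iff)
  show "ci*min (s*Si) 0 + cg*min (s*Sg) 0 + cj*min (s*Sj) 0 + ch*min (s*Sh) 0 \<ge> 0"
    by (rule term_L(1)[OF assms(1-4) s0 sameL])
  assume st: "(Si \<le> 0 \<and> Sj \<le> 0 \<and> (Sg > 0 \<or> Sh > 0)) \<or> (Si \<ge> 0 \<and> Sj \<ge> 0 \<and> (Sg < 0 \<or> Sh < 0))"
  have stL: "(s*Si \<le> 0 \<and> s*Sj \<le> 0 \<and> (s*Sg > 0 \<or> s*Sh > 0)) \<or> (s*Si \<ge> 0 \<and> s*Sj \<ge> 0 \<and> (s*Sg < 0 \<or> s*Sh < 0))"
    using assms(5) st by (cases "s > 0") (auto simp: mult_le_0_iff zero_le_mult_iff zero_less_mult_iff mult_less_0_iff)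
  show "ci*min (s*Si) 0 + cg*min (s*Sg) 0 + cj*min (s*Sj) 0 + ch*min (s*Sh) 0 > 0"
    by (rule term_L(2)[OF assms(1-4) s0 sameL stL])
qed

lemma quad_signs:
  fixes \<sigma> :: real and p :: "nat \<Rightarrow> real^2"
  assumes hpos: "\<forall>i j k. 1 \<le> i \<longrightarrow> i < j \<longrightarrow> j < k \<longrightarrow> k \<le> n \<longrightarrow> \<sigma> * orient (p i) (p j) (p k) > 0"
    and "1 \<le> i" "i < g" "g < j" "j \<le> n" "h \<in> {1..n} - {i..j}"
  shows "\<sigma> * orient (p g) (p j) (p h) > 0" "\<sigma> * orient (p i) (p j) (p h) > 0"
    "\<sigma> * orient (p i) (p g) (p h) > 0" "\<sigma> * orient (p i) (p g) (p j) > 0"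
proof -
  have "h < i \<or> j < h" using assms(6) by auto
  then have "\<sigma> * orient (p g) (p j) (p h) > 0 \<and> \<sigma> * orient (p i) (p j) (p h) > 0 \<and> \<sigma> * orient (p i) (p g) (p h) > 0"
  proof (elim disjE)
    assume "h < i"
    then have "1 \<le> h" using assms(6) by auto
    show "\<sigma> * orient (p g) (p j) (p h) > 0 \<and> \<sigma> * orient (p i) (p j) (p h) > 0 \<and> \<sigma> * orient (p i) (p g) (p h) > 0"
      using hpos[rule_format, of h g j] hpos[rule_format, of h i j] hpos[rule_format, of h i g]
        \<open>h < i\<close> \<open>1 \<le> h\<close> assms(2-5)
      by (simp_all add: orient_cyc[of "p h"])
  next
    assume "j < h"
    then have "h \<le> n" using assms(6) by auto
    show "\<sigma> * orient (p g) (p j) (p h) > 0 \<and> \<sigma> * orient (p i) (p j) (p h) > 0 \<and> \<sigma> * orient (p i) (p g) (p h) > 0"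
      using hpos[rule_format, of g j h] hpos[rule_format, of i j h] hpos[rule_format, of i g h]
        \<open>j < h\<close> \<open>h \<le> n\<close> assms(2-5) by simp_all
  qed
  then show "\<sigma> * orient (p g) (p j) (p h) > 0" "\<sigma> * orient (p i) (p j) (p h) > 0" "\<sigma> * orient (p i) (p g) (p h) > 0" by auto
  show "\<sigma> * orient (p i) (p g) (p j) > 0" using hpos assms(2-5) by auto
qed

lemma pairing_affine:
  "pairing n (\<lambda>k. a \<bullet> p k + b) c = a \<bullet> (\<Sum>k\<in>{1..n}. c k *\<^sub>R p k) + b * (\<Sum>k\<in>{1..n}. c k)"
  unfolding pairing_def by (simp add: algebra_simps sum.distrib sum_distrib_left inner_sum_right)



theorem lemma2p6:
  fixes n :: nat and p :: "nat \<Rightarrow> real^2"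
  assumes "n \<ge> 4" and "convex_ngon n p"
  shows "\<exists>x :: nat set \<Rightarrow> nat \<Rightarrow> real.
           (\<forall>d \<in> Diag n. x d \<in> XQ n p) \<and>
           (\<forall>d \<in> Diag n. \<forall>d' \<in> Diag n. \<not> crosses d d' \<longrightarrow>
              (\<forall>(a :: real^2) (b :: real). (a \<noteq> 0 \<or> b \<noteq> 0) \<longrightarrow>
                   (\<forall>i \<in> d'. a \<bullet> p i + b = 0) \<longrightarrow>
                   pairing n (psi p a b) (x d) > 0))"
proof -
  obtain \<sigma> :: real where hpos: "\<forall>i j k. 1 \<le> i \<longrightarrow> i < j \<longrightarrow> j < k \<longrightarrow> k \<le> n \<longrightarrow> \<sigma> * orient (p i) (p j) (p k) > 0"
    and sq: "\<sigma> * \<sigma> = 1"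
  proof (cases "\<forall>i j k. 1 \<le> i \<longrightarrow> i < j \<longrightarrow> j < k \<longrightarrow> k \<le> n \<longrightarrow> orient (p i) (p j) (p k) > 0")
    case True
    then show ?thesis using that[of 1] by simp
  next
    case False
    then have "\<forall>i j k. 1 \<le> i \<longrightarrow> i < j \<longrightarrow> j < k \<longrightarrow> k \<le> n \<longrightarrow> orient (p i) (p j) (p k) < 0"
      using assms(2) unfolding convex_ngon_def by blast
    then show ?thesis using that[of "-1"] by simp
  qed
  define x where "x d = (\<lambda>k. \<Sum>g\<in>{Min d<..<Max d}. \<Sum>h\<in>{1..n}-{Min d..Max d}. quadc p \<sigma> (Min d) g (Max d) h k)" for d
  have MM: "Min {i,j} = i" "Max {i,j} = j" if "i < (j::nat)" for i j using that by auto
  have xij: "x {i,j} = (\<lambda>k. \<Sum>g\<in>{i<..<j}. \<Sum>h\<in>{1..n}-{i..j}. quadc p \<sigma> i g j h k)" if "i < j" for i j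
    unfolding x_def MM[OF that] ..
  show ?thesis
  proof (intro exI[of _ x] conjI ballI allI impI)
    fix d assume "d \<in> Diag n"
    then obtain i j where ij: "d = {i, j}" "1 \<le> i" "i + 1 < j" "j \<le> n" "\<not> (i = 1 \<and> j = n)"
      using diag_elim assms(1) by metis
    have xd: "x d = (\<lambda>k. \<Sum>g\<in>{i<..<j}. \<Sum>h\<in>{1..n}-{i..j}. quadc p \<sigma> i g j h k)"
      using xij[of i j] ij by simp
    have mem: "i \<in> {1..n}" "g \<in> {1..n}" "j \<in> {1..n}" "h \<in> {1..n}"
      if "g \<in> {i<..<j}" "h \<in> {1..n}-{i..j}" for g h using that ij by auto
    show "x d \<in> XQ n p"
      unfolding XQ_def
    proof (intro CollectI conjI allI impI)
      fix k :: nat assume "k \<notin> {1..n}"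
      then have "quadc p \<sigma> i g j h k = 0" if "g \<in> {i<..<j}" "h \<in> {1..n}-{i..j}" for g h
        using quad_out[OF mem[OF that]] by blast
      then show "x d k = 0" unfolding xd by simp
    next
      show "(\<Sum>k\<in>{1..n}. x d k) = 0" unfolding xd
        by (subst sum.swap, rule sum.neutral, rule ballI, subst sum.swap, rule sum.neutral)
           (use quad_sum mem in auto)
    next
      show "(\<Sum>k\<in>{1..n}. x d k *\<^sub>R p k) = 0" unfolding xd scaleR_sum_left
        by (subst sum.swap, rule sum.neutral, rule ballI, subst sum.swap, rule sum.neutral)
           (use quad_vec mem in auto)
    qed
  next
    fix d d' a b
    assume dD: "d \<in> Diag n" and d'D: "d' \<in> Diag n" and nc: "\<not> crosses d d'"
      and ab: "a \<noteq> 0 \<or> b \<noteq> 0" and van: "\<forall>i\<in>d'. a \<bullet> p i + b = 0"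
    obtain i j where ij: "d = {i, j}" "1 \<le> i" "i + 1 < j" "j \<le> n" "\<not> (i = 1 \<and> j = n)"
      using diag_elim assms(1) dD by metis
    obtain u v where uv: "d' = {u, v}" "1 \<le> u" "u + 1 < v" "v \<le> n" "\<not> (u = 1 \<and> v = n)"
      using diag_elim assms(1) d'D by metis
    have xd: "x d = (\<lambda>k. \<Sum>g\<in>{i<..<j}. \<Sum>h\<in>{1..n}-{i..j}. quadc p \<sigma> i g j h k)"
      using xij[of i j] ij by simp
    have mem: "i \<in> {1..n}" "g \<in> {1..n}" "j \<in> {1..n}" "h \<in> {1..n}"
      if "g \<in> {i<..<j}" "h \<in> {1..n}-{i..j}" for g h using that ij by auto
    have nc1: "\<not> (i < u \<and> u < j \<and> j < v)"
      using nc ij(1) uv(1) unfolding crosses_def by blast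
    have nc2: "\<not> (u < i \<and> i < v \<and> v < j)"
      using nc ij(1) uv(1) unfolding crosses_def by blast
    define S where "S k = \<sigma> * orient (p u) (p v) (p k)" for k
    have uv': "1 \<le> u" "u < v" "v \<le> n" using uv by auto
    have S1: "k \<in> {1..n} \<Longrightarrow> k < u \<or> v < k \<Longrightarrow> S k > 0"
      and S2: "k \<in> {1..n} \<Longrightarrow> u < k \<Longrightarrow> k < v \<Longrightarrow> S k < 0"
      and S3: "k = u \<or> k = v \<Longrightarrow> S k = 0" for k
      unfolding S_def using side[OF hpos uv'] uv' by (auto simp: orient_degen)
    have puv: "p u \<noteq> p v"
    proof
      assume "p u = p v"
      then have "S (u+1) = 0" unfolding S_def by (simp add: orient_def)
      moreover have "S (u+1) < 0" using S2[of "u+1"] uv by auto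
      ultimately show False by simp
    qed
    obtain \<kappa> where \<kappa>: "\<kappa> \<noteq> 0" "\<forall>X. a \<bullet> X + b = \<kappa> * orient (p u) (p v) X"
      using line_rep[OF puv _ _ ab] van uv(1) by auto
    define s where "s = \<kappa> * \<sigma>"
    have s0: "s \<noteq> 0" using \<kappa> sq unfolding s_def by auto
    have L: "a \<bullet> p k + b = s * S k" for k
    proof -
      have "a \<bullet> p k + b = \<kappa> * (\<sigma> * \<sigma>) * orient (p u) (p v) (p k)" using \<kappa> sq by simp
      then show ?thesis unfolding s_def S_def by (simp add: algebra_simps)
    qed
    have psiL: "psi p a b k = min (s * S k) 0" for k unfolding psi_def L ..
    define T where "T g h = pairing n (psi p a b) (quadc p \<sigma> i g j h)" for g h
    have Tform: "T g h = (\<sigma> * orient (p g) (p j) (p h)) * min (s * S i) 0 + (- \<sigma> * orient (p i) (p j) (p h)) * min (s * S g) 0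
       + (\<sigma> * orient (p i) (p g) (p h)) * min (s * S j) 0 + (- \<sigma> * orient (p i) (p g) (p j)) * min (s * S h) 0"
      if "g \<in> {i<..<j}" "h \<in> {1..n}-{i..j}" for g h
      unfolding T_def quad_pair[OF mem[OF that]] psiL ..
    have Tsum0: "(\<sigma> * orient (p g) (p j) (p h)) * (s * S i) + (- \<sigma> * orient (p i) (p j) (p h)) * (s * S g)
       + (\<sigma> * orient (p i) (p g) (p h)) * (s * S j) + (- \<sigma> * orient (p i) (p g) (p j)) * (s * S h) = 0"
      if "g \<in> {i<..<j}" "h \<in> {1..n}-{i..j}" for g h
    proof -
      have "pairing n (\<lambda>k. a \<bullet> p k + b) (quadc p \<sigma> i g j h) = 0"
        unfolding pairing_affine quad_sum[OF mem[OF that]] quad_vec[OF mem[OF that]] by simp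
      then show ?thesis unfolding quad_pair[OF mem[OF that]] L .
    qed
    have sg: "\<sigma> * orient (p g) (p j) (p h) > 0" "- \<sigma> * orient (p i) (p j) (p h) < 0"
      "\<sigma> * orient (p i) (p g) (p h) > 0" "- \<sigma> * orient (p i) (p g) (p j) < 0"
      if "g \<in> {i<..<j}" "h \<in> {1..n}-{i..j}" for g h
      using quad_signs[OF hpos, of i g j h] that ij by auto
    have iin: "i \<in> {1..n}" "j \<in> {1..n}" using ij by auto
    have Sge: "S k \<ge> 0" if "k \<in> {1..n}" "\<not> (u < k \<and> k < v)" for k
    proof -
      have "k < u \<or> v < k \<or> k = u \<or> k = v" using that(2) by linarith
      then show ?thesis using S1[OF that(1)] S3[of k] by fastforce
    qed
    have Sle: "S k \<le> 0" if "k \<in> {1..n}" "u \<le> k" "k \<le> v" for k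
    proof -
      have "(u < k \<and> k < v) \<or> k = u \<or> k = v" using that(2,3) by linarith
      then show ?thesis using S2[OF that(1)] S3[of k] by fastforce
    qed
    have same: "(S i \<le> 0 \<and> S j \<le> 0) \<or> (S i \<ge> 0 \<and> S j \<ge> 0)"
    proof (cases "(u < i \<and> i < v) \<or> (u < j \<and> j < v)")
      case True
      then have "u \<le> i" "j \<le> v" using nc1 nc2 ij(3) by linarith+
      then show ?thesis using Sle[OF iin(1)] Sle[OF iin(2)] ij(3) by simp
    next
      case False
      then show ?thesis using Sge[OF iin(1)] Sge[OF iin(2)] by simp
    qed
    have Tnn: "T g h \<ge> 0" if "g \<in> {i<..<j}" "h \<in> {1..n}-{i..j}" for g h
      unfolding Tform[OF that]
      by (rule term_S(1)[OF sg(1)[OF that] sg(3)[OF that] sg(2)[OF that] sg(4)[OF that] s0 Tsum0[OF that] same])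
    have Tpos: "T g h > 0" if "g \<in> {i<..<j}" "h \<in> {1..n}-{i..j}"
      and "(S i \<le> 0 \<and> S j \<le> 0 \<and> (S g > 0 \<or> S h > 0)) \<or> (S i \<ge> 0 \<and> S j \<ge> 0 \<and> (S g < 0 \<or> S h < 0))" for g h
      unfolding Tform[OF that(1,2)]
      by (rule term_S(2)[OF sg(1)[OF that(1,2)] sg(3)[OF that(1,2)] sg(2)[OF that(1,2)] sg(4)[OF that(1,2)] s0 Tsum0[OF that(1,2)] same that(3)])
    have ex: "\<exists>g0 h0. g0 \<in> {i<..<j} \<and> h0 \<in> {1..n}-{i..j} \<and> T g0 h0 > 0"
    proof (cases "u \<le> i \<and> j \<le> v")
      case True
      define h0 where "h0 = (if 1 < u then 1 else n)"
      have h0: "h0 \<in> {1..n}-{i..j}" "S h0 > 0"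
        using True uv ij S1[of h0] unfolding h0_def by auto
      have "S i \<le> 0" "S j \<le> 0" using True Sle[OF iin(1)] Sle[OF iin(2)] ij by auto
      then have "T (i+1) h0 > 0" using Tpos[of "i+1" h0] h0 ij by auto
      then show ?thesis using h0 ij by (intro exI[of _ "i+1"] exI[of _ h0]) auto
    next
      case False
      have nin: "\<not> (u < i \<and> i < v)" "\<not> (u < j \<and> j < v)" using False nc1 nc2 ij by auto
      have "S i \<ge> 0" "S j \<ge> 0" using nin Sge[OF iin(1)] Sge[OF iin(2)] by auto
      define m where "m = u + 1"
      have m: "m \<in> {1..n}" "S m < 0" "m \<noteq> i" "m \<noteq> j" using S2[of m] uv nin unfolding m_def by auto
      show ?thesis
      proof (cases "i < m \<and> m < j")
        case True
        define h0 where "h0 = (if 1 < i then 1 else n)"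
        have h0: "h0 \<in> {1..n}-{i..j}" using ij unfolding h0_def by auto
        have "T m h0 > 0" using Tpos[of m h0] h0 True m \<open>S i \<ge> 0\<close> \<open>S j \<ge> 0\<close> by auto
        then show ?thesis using h0 True by (intro exI[of _ m] exI[of _ h0]) auto
      next
        case F2: False
        have h0: "m \<in> {1..n}-{i..j}" using F2 m by auto
        have "T (i+1) m > 0" using Tpos[of "i+1" m] h0 ij m \<open>S i \<ge> 0\<close> \<open>S j \<ge> 0\<close> by auto
        then show ?thesis using h0 ij by (intro exI[of _ "i+1"] exI[of _ m]) auto
      qed
    qed
    then obtain g0 h0 where g0h0: "g0 \<in> {i<..<j}" "h0 \<in> {1..n}-{i..j}" "T g0 h0 > 0" by blast
    have "pairing n (psi p a b) (x d) = (\<Sum>g\<in>{i<..<j}. \<Sum>h\<in>{1..n}-{i..j}. T g h)"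
      unfolding xd T_def by (rule pairing_dsum)
    also have "\<dots> > 0"
      by (rule dsum_pos) (use g0h0 Tnn in auto)
    finally show "pairing n (psi p a b) (x d) > 0" .
  qed
qed

end
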